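(* Let $\mu\in\mathbb{C}$ with $\mu\neq-1,-2,-3,\ldots$ and let $\ell\in\mathbb{N}_0$. Then for every $j\in\mathbb{N}_0$: (1) $M_j^{\mu,\ell}(x)$ is a polynomial in $x$ of degree $j+\ell$; (2) (top term) $M_j^{\mu,\ell}(x)=\frac{(-1)^j}{j!}x^{j+\ell}+(\text{terms of degree}<j+\ell)$; (3) (constant term) $$M_j^{\mu,\ell}(0)=\frac{2^{2\ell-\mu}\Gamma(\ell+\frac12)\Gamma(j+\mu+1)\left(\frac{\mu+1}{2}-\ell\right)_j}{j!\,\Gamma(\frac{\mu+2}{2})\,\Gamma(j+\frac{\mu+1}{2})},$$ where $(a)_n=a(a+1)\cdots(a+n-1)$ is the Pochhammer symbol.
   Context: Let $I_\alpha$, $K_\alpha$ be the modified Bessel functions and set $\widetilde I_\alpha(z)=(z/2)^{-\alpha}I_\alpha(z)$, $\widetilde K_\alpha(z)=(z/2)^{-\alpha}K_\alpha(z)$. For $\mu\in\mathbb{C}$, $\ell\in\mathbb{N}_0$, $x>0$ and $t$ near $0$ define $$G^{\mu,\ell}(t,x)=\frac{1}{(1-t)^{\ell+\frac{\mu+3}{2}}}\left(\frac x2\right)^{2\ell+1}e^{\frac x2}\,\widetilde I_{\frac\mu2}\!\left(\frac{tx}{2(1-t)}\right)\widetilde K_{\ell+\frac12}\!\left(\frac{x}{2(1-t)}\right),$$ and for $j\in\mathbb{N}_0$ $$M_j^{\mu,\ell}(x)=\frac{\Gamma(j+\mu+1)}{j!\,2^\mu\,\Gamma(j+\frac{\mu+1}{2})}\left.\frac{\partial^j}{\partial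 t^j}\right|_{t=0}G^{\mu,\ell}(t,x).$$ *)

theory Defs
  imports "HOL-Analysis.Analysis" "HOL-Computational_Algebra.Polynomial"
begin

text \<open>Normalised modified Bessel function of the first kind (entire in z):
  tilde I_a(z) = (z/2)^(-a) I_a(z) = sum_k (z/2)^(2k) / (k! Gamma(k+a+1)),
  written with the reciprocal Gamma function so that it is defined for all a.\<close>
definition BesselI_tilde :: "complex \<Rightarrow> complex \<Rightarrow> complex" where
  "BesselI_tilde a z = (\<Sum>k. (z/2)^(2*k) * rGamma (of_nat k + a + 1) / fact k)"

definition BesselI :: "complex \<Rightarrow> complex \<Rightarrow> complex" where
  "BesselI a z = (z/2) powr a * BesselI_tilde a z"

definition BesselK_aux :: "complex \<Rightarrow> complex \<Rightarrow> complex" where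
  "BesselK_aux a z = (of_real pi / 2) * (BesselI (-a) z - BesselI a z) / sin (a * of_real pi)"

definition BesselK :: "complex \<Rightarrow> complex \<Rightarrow> complex" where
  "BesselK a z = (if a \<in> \<int> then Lim (at a) (\<lambda>b. BesselK_aux b z) else BesselK_aux a z)"

definition BesselK_tilde :: "complex \<Rightarrow> complex \<Rightarrow> complex" where
  "BesselK_tilde a z = (z/2) powr (-a) * BesselK a z"

definition G_gen :: "complex \<Rightarrow> nat \<Rightarrow> complex \<Rightarrow> real \<Rightarrow> complex" where
  "G_gen \<mu> l t x =
     (1 - t) powr (-(of_nat l + (\<mu> + 3)/2))
     * of_real ((x/2)^(2*l+1) * exp (x/2))
     * BesselI_tilde (\<mu>/2) (t * of_real x / (2*(1 - t)))
     * BesselK_tilde (of_nat l + 1/2) (of_real x / (2*(1 - t)))"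

definition M_poly :: "complex \<Rightarrow> nat \<Rightarrow> nat \<Rightarrow> real \<Rightarrow> complex" where
  "M_poly \<mu> l j x =
     Gamma (of_nat j + \<mu> + 1) / (fact j * 2 powr \<mu> * Gamma (of_nat j + (\<mu> + 1)/2))
     * (deriv ^^ j) (\<lambda>t. G_gen \<mu> l t x) 0"

end

theory Submission
  imports Defs "HOL-Complex_Analysis.Complex_Analysis"
begin

lemma BesselI_term_summable:
  fixes a z :: complex
  shows "summable (\<lambda>k. (z/2)^(2*k) * rGamma (of_nat k + a + 1) / fact k)"
proof -
  define f where "f = (\<lambda>k. (z/2)^(2*k) * rGamma (of_nat k + a + 1) / fact k)"
  obtain N :: nat where N: "real N \<ge> 2 * norm (z/2)^2 + norm (a+1) + 1"
    using real_arch_simple by blast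
  have "norm (f (Suc n)) \<le> 1/2 * norm (f n)" if "n \<ge> N" for n
  proof -
    have nN: "real n \<ge> 2 * norm (z/2)^2 + norm (a+1) + 1" using N that by linarith
    define w where "w = of_nat n + a + 1"
    have "norm w \<ge> real n - norm (a+1)"
      unfolding w_def using norm_diff_ineq[of "of_nat n :: complex" "a+1"] by (simp add: add.assoc)
    hence wge: "norm w \<ge> 1" using nN by (smt (verit) zero_le_power2 norm_ge_zero)
    hence w0: "w \<noteq> 0" by auto
    have rg: "rGamma (of_nat (Suc n) + a + 1) = rGamma w / w"
      using rGamma_plus1[of w] w0 by (simp add: w_def field_simps add_ac)
    have "f (Suc n) = f n * ((z/2)^2 / (w * of_nat (Suc n)))"
      unfolding f_def rg by (simp add: w_def field_simps power_mult_distrib power2_eq_square power_add)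
    hence "norm (f (Suc n)) = norm (f n) * (norm (z/2)^2 / (norm w * real (Suc n)))"
      by (simp add: norm_mult norm_divide norm_power del: of_nat_Suc)
    also have "norm (z/2)^2 / (norm w * real (Suc n)) \<le> 1/2"
    proof -
      have "norm w * real (Suc n) \<ge> real (Suc n)" using wge by simp
      moreover have "real (Suc n) \<ge> 2 * norm (z/2)^2" using nN norm_ge_zero[of "a+1"] by (simp only: of_nat_Suc)
      ultimately show ?thesis using wge by (simp add: field_simps)
    qed
    hence "norm (f n) * (norm (z/2)^2 / (norm w * real (Suc n))) \<le> norm (f n) * (1/2)"
      by (intro mult_left_mono) auto
    finally show ?thesis by simp
  qed
  hence "summable f" by (intro summable_ratio_test[of "1/2" N]) auto
  thus ?thesis by (simp add: f_def)
qed

lemma BesselI_tilde_sums: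
  "(\<lambda>k. (z/2)^(2*k) * rGamma (of_nat k + a + 1) / fact k) sums BesselI_tilde a z"
  unfolding BesselI_tilde_def using BesselI_term_summable by (rule summable_sums)

lemma rGamma_plus1_div: "x \<noteq> 0 \<Longrightarrow> rGamma (x + 1) = rGamma x / (x :: complex)"
  using rGamma_plus1[of x] by (simp add: field_simps)

lemma nat_half_nz: "(of_nat k + 1/2 :: complex) \<noteq> 0"
proof
  assume "(of_nat k + 1/2 :: complex) = 0"
  hence "Re (of_nat k + 1/2 :: complex) = 0" by simp
  thus False by simp
qed

lemma four_pow: "(4::complex)^k = 2^k * 2^k"
  by (simp add: power_mult_distrib[symmetric])

lemma fact_2Suc: "(fact (2 * Suc k) :: complex) = (2 * of_nat k + 2) * (2 * of_nat k + 1) * fact (2*k)"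
proof -
  have "2 * Suc k = Suc (Suc (2*k))" by simp
  hence "(fact (2 * Suc k) :: complex) = fact (Suc (Suc (2*k)))" by simp
  also have "\<dots> = of_nat (Suc (Suc (2*k))) * (of_nat (Suc (2*k)) * fact (2*k))"
    by (simp only: fact_Suc of_nat_mult)
  finally show ?thesis by (simp add: algebra_simps)
qed

lemma two_pow2: "(2::complex)^(k*2) = 2^k * 2^k" "(2::complex)^(2*k) = 2^k * 2^k"
  by (simp_all add: power_add[symmetric] mult_2 mult_2_right)

lemma sqrtpi_nz [simp]: "(of_real (sqrt pi) :: complex) \<noteq> 0" by simp

lemma re_pos_nz: "Re w > 0 \<Longrightarrow> w \<noteq> 0" by auto

lemma nat_nz: "(of_nat k + 1 :: complex) \<noteq> 0" "(2 * of_nat k + 2 :: complex) \<noteq> 0"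
   "(2 * of_nat k + 1 :: complex) \<noteq> 0" "(1 + of_nat k :: complex) \<noteq> 0" "(1 + 2 * of_nat k :: complex) \<noteq> 0"
  by (rule re_pos_nz; simp)+

lemma aux_div: fixes A B K :: complex assumes "B \<noteq> 0" "2*K+1 \<noteq> 0" "K+1 \<noteq> 0"
  shows "A/B/(K+1/2) = 4*A*(K+1)/((2*K+2)*(2*K+1)*B)"
  using assms by (simp add: divide_simps) algebra

lemma rGamma_nat_half:
  "rGamma (of_nat k + 1/2 :: complex) = 4^k * fact k / (fact (2*k) * of_real (sqrt pi))"
proof (induction k)
  case 0
  then show ?case by (simp add: rGamma_inverse_Gamma Gamma_one_half_complex field_simps)
next
  case (Suc k)
  have "rGamma (of_nat (Suc k) + 1/2 :: complex) = rGamma (of_nat k + 1/2 + 1)"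
    by (simp add: add_ac)
  also have "\<dots> = rGamma (of_nat k + 1/2) / (of_nat k + 1/2)"
    by (rule rGamma_plus1_div[OF nat_half_nz])
  also have "\<dots> = 4 * (4^k * fact k) * (of_nat k + 1) / ((2 * of_nat k + 2) * (2 * of_nat k + 1) * (fact (2*k) * of_real (sqrt pi)))"
    unfolding Suc.IH by (rule aux_div) (use nat_nz[of k] in auto)
  also have "\<dots> = 4^(Suc k) * fact (Suc k) / (fact (2*Suc k) * of_real (sqrt pi))"
    unfolding fact_2Suc by (simp add: mult_ac)
  finally show ?case .
qed

lemma BesselI_tilde_mhalf: "BesselI_tilde (-1/2) z = cosh z / of_real (sqrt pi)"
proof -
  have "(\<lambda>n. if even n then z ^ n /\<^sub>R fact n else 0) sums cosh z" by (rule cosh_converges)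
  also have "(\<lambda>n. if even n then z ^ n /\<^sub>R fact n else 0) sums cosh z \<longleftrightarrow>
     (\<lambda>n. z^(2*n) /\<^sub>R fact (2*n)) sums cosh z"
    by (subst sums_mono_reindex[of "\<lambda>n. 2*n", symmetric])
       (auto simp: strict_mono_def elim!: evenE)
  finally have "(\<lambda>n. z^(2*n) /\<^sub>R fact (2*n)) sums cosh z" .
  hence 1: "(\<lambda>n. z^(2*n) /\<^sub>R fact (2*n) / of_real (sqrt pi)) sums (cosh z / of_real (sqrt pi))"
    by (rule sums_divide)
  have 2: "(\<lambda>n. z^(2*n) /\<^sub>R fact (2*n) / of_real (sqrt pi)) =
                 (\<lambda>k. (z/2)^(2*k) * rGamma (of_nat k + (-1/2) + 1) / fact k)"
  proof
    fix k
    have e: "of_nat k + (-1/2) + 1 = (of_nat k + 1/2 :: complex)" by simp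
    show "z^(2*k) /\<^sub>R fact (2*k) / of_real (sqrt pi) =
          (z/2)^(2*k) * rGamma (of_nat k + (-1/2) + 1) / fact k"
      unfolding e rGamma_nat_half
      by (simp add: scaleR_conv_of_real power_divide four_pow two_pow2 divide_simps)
  qed
  show ?thesis using 1 BesselI_tilde_sums[of z "-1/2"] unfolding 2 by (rule sums_unique2[symmetric])
qed

lemma BesselI_tilde_half: "z * BesselI_tilde (1/2) z = 2 * sinh z / of_real (sqrt pi)"
proof -
  have "(\<lambda>n. if even n then 0 else z ^ n /\<^sub>R fact n) sums sinh z" by (rule sinh_converges)
  also have "(\<lambda>n. if even n then 0 else z ^ n /\<^sub>R fact n) sums sinh z \<longleftrightarrow>
     (\<lambda>n. z^(2*n+1) /\<^sub>R fact (2*n+1)) sums sinh z"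
    by (subst sums_mono_reindex[of "\<lambda>n. 2*n+1", symmetric])
       (auto simp: strict_mono_def elim!: oddE)
  finally have "(\<lambda>n. z^(2*n+1) /\<^sub>R fact (2*n+1)) sums sinh z" .
  hence 1: "(\<lambda>n. 2 * (z^(2*n+1) /\<^sub>R fact (2*n+1)) / of_real (sqrt pi)) sums (2 * sinh z / of_real (sqrt pi))"
    by (intro sums_divide sums_mult)
  have 3: "(\<lambda>k. z * ((z/2)^(2*k) * rGamma (of_nat k + 1/2 + 1) / fact k)) sums (z * BesselI_tilde (1/2) z)"
    by (intro sums_mult BesselI_tilde_sums)
  have 2: "(\<lambda>n. 2 * (z^(2*n+1) /\<^sub>R fact (2*n+1)) / of_real (sqrt pi)) =
                 (\<lambda>k. z * ((z/2)^(2*k) * rGamma (of_nat k + 1/2 + 1) / fact k))"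
  proof
    fix k
    have e: "rGamma (of_nat k + 1/2 + 1) = rGamma (of_nat k + 1/2 :: complex) / (of_nat k + 1/2)"
      by (rule rGamma_plus1_div[OF nat_half_nz])
    have f: "(fact (2*k+1) :: complex) = (2 * of_nat k + 1) * fact (2*k)"
      by (simp add: algebra_simps)
    have h: "(of_nat k + 1/2 :: complex) = (2 * of_nat k + 1) / 2" by simp
    show "2 * (z^(2*k+1) /\<^sub>R fact (2*k+1)) / of_real (sqrt pi) =
          z * ((z/2)^(2*k) * rGamma (of_nat k + 1/2 + 1) / fact k)"
      unfolding e rGamma_nat_half scaleR_conv_of_real of_real_inverse of_real_fact f unfolding h
      using nat_nz(3)[of k] by (simp add: power_divide four_pow two_pow2 divide_simps)
  qed
  show ?thesis using 1 3 unfolding 2 by (rule sums_unique2[symmetric])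
qed

lemma BesselI_tilde_rec:
  "BesselI_tilde a z = (a+1) * BesselI_tilde (a+1) z + (z/2)^2 * BesselI_tilde (a+2) z"
proof -
  define h where "h = (\<lambda>k. (z/2)^(2*k) * rGamma (of_nat k + a + 2) * of_nat k / fact k)"
  have 1: "(\<lambda>k. (z/2)^2 * ((z/2)^(2*k) * rGamma (of_nat k + (a+2) + 1) / fact k)) sums ((z/2)^2 * BesselI_tilde (a+2) z)"
    by (intro sums_mult BesselI_tilde_sums)
  have 2: "(\<lambda>k. (z/2)^2 * ((z/2)^(2*k) * rGamma (of_nat k + (a+2) + 1) / fact k)) = (\<lambda>k. h (Suc k))"
  proof
    fix k
    have nz: "(of_nat (Suc k) :: complex) \<noteq> 0" by (metis Zero_not_Suc of_nat_eq_0_iff)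
    have e1: "(fact (Suc k) :: complex) = of_nat (Suc k) * fact k" by simp
    have e2: "of_nat (Suc k) + a + 2 = of_nat k + (a+2) + (1::complex)" by (simp add: add_ac)
    have e3: "(z/2)^(2 * Suc k) = (z/2)^2 * (z/2)^(2*k)" by (simp add: power_add[symmetric])
    show "(z/2)^2 * ((z/2)^(2*k) * rGamma (of_nat k + (a+2) + 1) / fact k) = h (Suc k)"
      unfolding h_def e1 e2 e3 using nz by (simp add: divide_simps del: of_nat_Suc)
  qed
  have "(\<lambda>k. h (Suc k)) sums ((z/2)^2 * BesselI_tilde (a+2) z)"
    using 1 unfolding 2 .
  hence "h sums ((z/2)^2 * BesselI_tilde (a+2) z + h 0)"
    by (simp add: sums_Suc_iff)
  hence 3: "h sums ((z/2)^2 * BesselI_tilde (a+2) z)" by (simp add: h_def)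
  have 4: "(\<lambda>k. (a+1) * ((z/2)^(2*k) * rGamma (of_nat k + (a+1) + 1) / fact k)) sums ((a+1) * BesselI_tilde (a+1) z)"
    by (intro sums_mult BesselI_tilde_sums)
  have 5: "(\<lambda>k. (a+1) * ((z/2)^(2*k) * rGamma (of_nat k + (a+1) + 1) / fact k) + h k)
      sums ((a+1) * BesselI_tilde (a+1) z + (z/2)^2 * BesselI_tilde (a+2) z)"
    using 4 3 by (rule sums_add)
  have 6: "(\<lambda>k. (a+1) * ((z/2)^(2*k) * rGamma (of_nat k + (a+1) + 1) / fact k) + h k) =
                 (\<lambda>k. (z/2)^(2*k) * rGamma (of_nat k + a + 1) / fact k)"
  proof
    fix k
    have eq: "rGamma (of_nat k + a + 1) = (of_nat k + a + 1) * rGamma (of_nat k + a + 2)"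
      using rGamma_plus1[of "of_nat k + a + 1"] by (simp add: add.assoc)
    have e: "of_nat k + (a+1) + 1 = of_nat k + a + (2::complex)" by simp
    show "(a+1) * ((z/2)^(2*k) * rGamma (of_nat k + (a+1) + 1) / fact k) + h k =
          (z/2)^(2*k) * rGamma (of_nat k + a + 1) / fact k"
      unfolding h_def eq e by (simp add: algebra_simps add_divide_distrib[symmetric])
  qed
  show ?thesis using BesselI_tilde_sums[of z a] 5 unfolding 6 by (rule sums_unique2)
qed

definition Rk :: "nat \<Rightarrow> complex \<Rightarrow> complex" where
  "Rk l z = (-1)^l * (inverse ((z/2)^(2*l+1)) * BesselI_tilde (-(of_nat l + 1/2)) z
                      - BesselI_tilde (of_nat l + 1/2) z)"

fun Pl :: "nat \<Rightarrow> complex poly" where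
  "Pl 0 = 1"
| "Pl (Suc 0) = [:1, 1:]"
| "Pl (Suc (Suc l)) = Pl l + smult (2 * of_nat l + 3) (pCons 0 (Pl (Suc l)))"

definition Qk :: "nat \<Rightarrow> complex \<Rightarrow> complex" where
  "Qk l z = 2^l * of_real (sqrt pi) * inverse (z^(l+1)) * exp (-z) * poly (Pl l) (inverse z)"

lemma rec_alg:
  fixes w iw v Ip1 Ip3 Ip5 Im1 Im3 Im5 c s :: complex
  assumes "w * iw = 1" "Ip1 = c * Ip3 + w^2 * Ip5" "Im5 = -c * Im3 + w^2 * Im1"
  shows "w^2 * (s * (v * iw^4*Im5 - Ip5)) = s * (v * Im1 - Ip1) + c * (-s * (v * iw^2*Im3 - Ip3))"
  using assms by algebra

lemma Rk_rec:
  assumes "z \<noteq> 0"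
  shows "(z/2)^2 * Rk (Suc (Suc l)) z = Rk l z + (of_nat l + 3/2) * Rk (Suc l) z"
proof -
  define w where "w = z/2"
  have w0: "w \<noteq> 0" using assms by (simp add: w_def)
  have r1: "BesselI_tilde (of_nat l + 1/2) z = (of_nat l + 3/2) * BesselI_tilde (of_nat (Suc l) + 1/2) z
              + w^2 * BesselI_tilde (of_nat (Suc (Suc l)) + 1/2) z"
    using BesselI_tilde_rec[of "of_nat l + 1/2" z] unfolding w_def
    by (simp add: add_ac)
  have r2: "BesselI_tilde (-(of_nat (Suc (Suc l)) + 1/2)) z = -(of_nat l + 3/2) * BesselI_tilde (-(of_nat (Suc l) + 1/2)) z
              + w^2 * BesselI_tilde (-(of_nat l + 1/2)) z"
    using BesselI_tilde_rec[of "-(of_nat (Suc (Suc l)) + 1/2)" z] unfolding w_def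
    by (simp add: algebra_simps)
  have p1: "inverse (w^(2 * Suc (Suc l) + 1)) = inverse (w^(2*l+1)) * inverse w ^ 4"
  proof -
    have e: "2 * Suc (Suc l) + 1 = (2*l+1) + 4" by simp
    have "w^(2 * Suc (Suc l) + 1) = w^(2*l+1) * w^4" by (simp only: e power_add)
    thus ?thesis by (simp only: inverse_mult_distrib power_inverse)
  qed
  have p2: "inverse (w^(2 * Suc l + 1)) = inverse (w^(2*l+1)) * inverse w ^ 2"
  proof -
    have e: "2 * Suc l + 1 = (2*l+1) + 2" by simp
    have "w^(2 * Suc l + 1) = w^(2*l+1) * w^2" by (simp only: e power_add)
    thus ?thesis by (simp only: inverse_mult_distrib power_inverse)
  qed
  have s1: "(-1::complex)^(Suc (Suc l)) = (-1)^l" "(-1::complex)^(Suc l) = -((-1)^l)" by simp_all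
  show ?thesis
    unfolding Rk_def w_def[symmetric] p1 p2 s1
    by (rule rec_alg[OF _ r1 r2]) (use w0 in simp)
qed

lemma qalg:
  fixes z iz V T s E A B L :: complex
  assumes "z * iz = 1"
  shows "(z/2)^2 * ((4*T) * s * (V * iz^2) * E * (A + (2*L+3) * (iz * B)))
       = T * s * V * E * A + (L + 3/2) * ((2*T) * s * (V * iz) * E * B)"
proof -
  have "(z/2)^2 * ((4*T) * s * (V * iz^2) * E * (A + (2*L+3) * (iz * B))) = (z*iz)^2 * T * s * V * E * (A + (2*L+3) * (iz * B))"
    by (simp add: power2_eq_square algebra_simps)
  also have "\<dots> = T * s * V * E * (A + (2*L+3) * (iz * B))" using assms by simp
  also have "\<dots> = T * s * V * E * A + (L + 3/2) * ((2*T) * s * (V * iz) * E * B)"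
    by (simp add: algebra_simps)
  finally show ?thesis .
qed

lemma Qk_rec:
  assumes "z \<noteq> 0"
  shows "(z/2)^2 * Qk (Suc (Suc l)) z = Qk l z + (of_nat l + 3/2) * Qk (Suc l) z"
proof -
  define iz where "iz = inverse z"
  have zi: "z * iz = 1" using assms by (simp add: iz_def)
  have e1: "inverse (z^(Suc (Suc l)+1)) = inverse (z^(l+1)) * iz^2"
  proof -
    have e: "Suc (Suc l) + 1 = (l+1) + 2" by simp
    have "z^(Suc (Suc l) + 1) = z^(l+1) * z^2" by (simp only: e power_add)
    thus ?thesis unfolding iz_def by (simp only: inverse_mult_distrib power_inverse)
  qed
  have e2: "inverse (z^(Suc l+1)) = inverse (z^(l+1)) * iz"
  proof -
    have e: "Suc l + 1 = (l+1) + 1" by simp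
    have "z^(Suc l + 1) = z^(l+1) * z" by (simp only: e power_add power_one_right)
    thus ?thesis unfolding iz_def by (simp only: inverse_mult_distrib)
  qed
  have t1: "(2::complex)^(Suc (Suc l)) = 4 * 2^l" "(2::complex)^(Suc l) = 2 * 2^l" by simp_all
  have pp: "poly (Pl (Suc (Suc l))) iz = poly (Pl l) iz + (2 * of_nat l + 3) * (iz * poly (Pl (Suc l)) iz)"
    by simp
  show ?thesis
    unfolding Qk_def e1 e2 iz_def[symmetric] t1 pp
    by (rule qalg[OF zi])
qed

lemma base0_alg:
  fixes z sp C S E P I1 J1 :: complex
  assumes "z \<noteq> 0" "sp \<noteq> 0" "P = sp^2" "E = C - S" "I1 = C / sp" "z * J1 = 2 * S / sp"
  shows "P / 2 * (inverse (z/2) * I1 - J1) = sp * inverse z * E"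
proof -
  have J: "J1 = 2 * S / (sp * z)" using assms(1,2,6) by (simp add: field_simps)
  show ?thesis using assms(1,2) unfolding J assms(3,4,5) by (simp add: field_simps power2_eq_square)
qed

lemma base1_alg:
  fixes z sp C S E P I1 J1 J3 I3 :: complex
  assumes "z \<noteq> 0" "sp \<noteq> 0" "P = sp^2" "E = C - S" "I1 = C / sp" "z * J1 = 2 * S / sp"
    "I1 = 1/2 * J1 + (z/2)^2 * J3" "I3 = -(1/2) * I1 + (z/2)^2 * J1"
  shows "P / 2 * (- (inverse ((z/2)^3) * I3 - J3)) = 2 * sp * inverse (z^2) * E * (1 + inverse z)"
proof -
  have J: "J1 = 2 * S / (sp * z)" using assms(1,2,6) by (simp add: field_simps)
  have J3: "J3 = (I1 - J1/2) / (z/2)^2" using assms(1,7) by (simp add: field_simps) algebra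
  show ?thesis using assms(1,2) unfolding J3 assms(8) unfolding J assms(3,4,5)
    by (simp add: field_simps power2_eq_square power3_eq_cube)
qed

lemma pi_sq: "(of_real pi :: complex) = (of_real (sqrt pi))^2"
  by (simp flip: of_real_power)

lemma mhalf': "BesselI_tilde (-(1/2)) z = cosh z / of_real (sqrt pi)"
proof -
  have "-(1/2) = (-1/2 :: complex)" by simp
  thus ?thesis using BesselI_tilde_mhalf by simp
qed

lemma Rk_Qk_0: "z \<noteq> 0 \<Longrightarrow> of_real pi / 2 * Rk 0 z = Qk 0 z"
  unfolding Rk_def Qk_def
  using base0_alg[of z "of_real (sqrt pi)" "of_real pi" "exp (-z)" "cosh z" "sinh z"
      "BesselI_tilde (-(1/2)) z" "BesselI_tilde (1/2) z"]
  by (simp add: pi_sq cosh_minus_sinh mhalf' BesselI_tilde_half)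

lemma Rk_Qk_1: "z \<noteq> 0 \<Longrightarrow> of_real pi / 2 * Rk 1 z = Qk 1 z"
proof -
  assume z: "z \<noteq> 0"
  have r1: "BesselI_tilde (-(1/2)) z = 1/2 * BesselI_tilde (1/2) z + (z/2)^2 * BesselI_tilde (3/2) z"
    using BesselI_tilde_rec[of "-(1/2)" z] by simp
  have r2: "BesselI_tilde (-(3/2)) z = -(1/2) * BesselI_tilde (-(1/2)) z + (z/2)^2 * BesselI_tilde (1/2) z"
    using BesselI_tilde_rec[of "-(3/2)" z] by simp
  have e1: "-(of_nat 1 + 1/2) = -(3/2::complex)" "of_nat 1 + 1/2 = (3/2::complex)" by simp_all
  have "of_real pi / 2 * (- (inverse ((z/2)^3) * BesselI_tilde (-(3/2)) z - BesselI_tilde (3/2) z))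
        = 2 * of_real (sqrt pi) * inverse (z^2) * exp (-z) * (1 + inverse z)"
    by (rule base1_alg[OF z _ pi_sq _ mhalf' BesselI_tilde_half r1 r2])
       (simp_all add: cosh_minus_sinh)
  thus ?thesis unfolding Rk_def Qk_def e1 by (simp add: mult_ac power2_eq_square)
qed

lemma Rk_Qk: "z \<noteq> 0 \<Longrightarrow> of_real pi / 2 * Rk l z = Qk l z"
proof (induction l rule: Pl.induct)
  case 1 thus ?case by (rule Rk_Qk_0)
next
  case 2 thus ?case using Rk_Qk_1 by simp
next
  case (3 l)
  have w: "(z/2)^2 \<noteq> 0" using 3 by simp
  have "(z/2)^2 * (of_real pi / 2 * Rk (Suc (Suc l)) z) = of_real pi / 2 * ((z/2)^2 * Rk (Suc (Suc l)) z)"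
    by (simp add: mult_ac)
  also have "\<dots> = of_real pi / 2 * Rk l z + (of_nat l + 3/2) * (of_real pi / 2 * Rk (Suc l) z)"
    unfolding Rk_rec[OF 3(3)] by (simp add: algebra_simps)
  also have "\<dots> = Qk l z + (of_nat l + 3/2) * Qk (Suc l) z" using 3 by simp
  also have "\<dots> = (z/2)^2 * Qk (Suc (Suc l)) z" using Qk_rec[OF 3(3)] by simp
  finally show ?case using w by simp
qed

lemma half_not_Int: "(of_nat l + 1/2 :: complex) \<notin> \<int>"
proof
  assume "(of_nat l + 1/2 :: complex) \<in> \<int>"
  then obtain m where m: "(of_nat l + 1/2 :: complex) = of_int m" by (auto elim: Ints_cases)
  hence "Re (of_nat l + 1/2 :: complex) = Re (of_int m)" by simp
  hence "real l + 1/2 = real_of_int m" by simp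
  hence "real_of_int (2 * int l + 1) = real_of_int (2 * m)" by simp
  hence "2 * int l + 1 = 2 * m" by (simp only: of_int_eq_iff)
  thus False by presburger
qed

lemma sin_half_int: "sin ((of_nat l + 1/2) * of_real pi :: complex) = (-1)^l"
proof -
  have "(of_nat l + 1/2) * of_real pi = (of_real ((real l + 1/2) * pi) :: complex)" by simp
  hence "sin ((of_nat l + 1/2) * of_real pi :: complex) = of_real (sin (real l * pi + pi/2))"
    by (simp only: sin_of_real) (simp add: algebra_simps)
  also have "sin (real l * pi + pi/2) = (-1)^l" by (simp add: sin_add cos_npi)
  finally show ?thesis by simp
qed

lemma div_m1pow: "(x::complex) / (-1)^l = (-1)^l * x"
  by (cases "even l") auto

lemma BesselK_tilde_half:
  assumes z: "z \<noteq> 0"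
  shows "BesselK_tilde (of_nat l + 1/2) z = Qk l z"
proof -
  define a where "a = (of_nat l + 1/2 :: complex)"
  define w where "w = z/2"
  have w0: "w \<noteq> 0" using z by (simp add: w_def)
  have p1: "w powr (-a) * w powr (-a) = inverse (w^(2*l+1))"
  proof -
    have e: "-a + -a = -(of_nat (2*l+1))" by (simp add: a_def algebra_simps)
    have "w powr (-a) * w powr (-a) = w powr (-a + -a)" by (rule powr_add[symmetric])
    also have "\<dots> = w powr (-(of_nat (2*l+1)))" by (simp only: e)
    finally have "w powr (-a) * w powr (-a) = w powr (-(of_nat (2*l+1)))" .
    also have "\<dots> = inverse (w powr (of_nat (2*l+1)))" by (rule powr_minus)
    also have "\<dots> = inverse (w^(2*l+1))" using powr_complexpow[OF w0, of "2*l+1"] by (simp only:)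
    finally show ?thesis .
  qed
  have p2: "w powr (-a) * w powr a = 1"
    using w0 by (simp add: powr_add[symmetric])
  have s: "sin (a * of_real pi) = (-1)^l" unfolding a_def by (rule sin_half_int)
  have "BesselK_tilde a z = w powr (-a) * (of_real pi / 2 * (w powr (-a) * BesselI_tilde (-a) z
                - w powr a * BesselI_tilde a z) / (-1)^l)"
    unfolding BesselK_tilde_def BesselK_def BesselK_aux_def BesselI_def
    using half_not_Int[of l] s by (simp add: a_def w_def)
  also have "\<dots> = of_real pi / 2 * ((w powr (-a) * w powr (-a)) * BesselI_tilde (-a) z
                - (w powr (-a) * w powr a) * BesselI_tilde a z) / (-1)^l"
    by (simp add: algebra_simps)
  also have "\<dots> = of_real pi / 2 * Rk l z"
    unfolding p1 p2 unfolding Rk_def a_def w_def[symmetric]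
    by (simp only: div_m1pow) (simp add: algebra_simps)
  also have "\<dots> = Qk l z" by (rule Rk_Qk[OF z])
  finally show ?thesis by (simp add: a_def)
qed

definition Ifps :: "complex \<Rightarrow> complex fps" where
  "Ifps \<nu> = Abs_fps (\<lambda>n. if even n then rGamma (of_nat (n div 2) + \<nu> + 1) / (4^(n div 2) * fact (n div 2)) else 0)"

definition Efps :: "complex \<Rightarrow> complex fps" where
  "Efps \<nu> = fps_exp (-1) * Ifps \<nu>"

lemma Ifps_rec:
  "of_nat (Suc m) * (of_nat m + 2*\<nu>+1) * (Ifps \<nu> $ Suc m) = (if m = 0 then 0 else Ifps \<nu> $ (m - 1))"
proof (cases "even m")
  case True
  then show ?thesis by (cases m) (auto simp: Ifps_def)
next
  case False
  then obtain k where m: "m = 2*k+1" by (auto elim: oddE)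
  have eq: "rGamma (of_nat k + \<nu> + 1) = (of_nat k + \<nu> + 1) * rGamma (of_nat (Suc k) + \<nu> + 1)"
    using rGamma_plus1[of "of_nat k + \<nu> + 1"] by (simp add: add_ac)
  have "Suc m = 2 * Suc k" "m - 1 = 2*k" using m by simp_all
  hence "of_nat (Suc m) * (of_nat m + 2*\<nu>+1) * (Ifps \<nu> $ Suc m)
      = (2 * of_nat (Suc k)) * (2 * (of_nat k + \<nu> + 1)) * (rGamma (of_nat (Suc k) + \<nu> + 1) / (4^(Suc k) * fact (Suc k)))"
    "Ifps \<nu> $ (m - 1) = rGamma (of_nat k + \<nu> + 1) / (4^k * fact k)"
    unfolding Ifps_def using m by (simp_all add: algebra_simps)
  moreover have "(2 * of_nat (Suc k)) * (2 * (of_nat k + \<nu> + 1)) * (rGamma (of_nat (Suc k) + \<nu> + 1) / (4^(Suc k) * fact (Suc k)))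
      = rGamma (of_nat k + \<nu> + 1) / (4^k * fact k)"
    unfolding eq by (simp add: field_simps del: of_nat_Suc)
  ultimately show ?thesis using m by simp
qed

lemma Ifps_ode:
  "fps_X * fps_deriv (fps_deriv (Ifps \<nu>)) + fps_const (2*\<nu>+1) * fps_deriv (Ifps \<nu>) = fps_X * Ifps \<nu>"
proof (rule fps_ext)
  fix m
  have "(fps_X * fps_deriv (fps_deriv (Ifps \<nu>)) + fps_const (2*\<nu>+1) * fps_deriv (Ifps \<nu>)) $ m
        = of_nat (Suc m) * (of_nat m + 2*\<nu>+1) * (Ifps \<nu> $ Suc m)"
    by (cases m) (simp_all add: algebra_simps)
  also have "\<dots> = (fps_X * Ifps \<nu>) $ m" by (subst Ifps_rec) simp
  finally show "(fps_X * fps_deriv (fps_deriv (Ifps \<nu>)) + fps_const (2*\<nu>+1) * fps_deriv (Ifps \<nu>)) $ m = (fps_X * Ifps \<nu>) $ m" .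
qed

lemma Efps_ode:
  "fps_X * fps_deriv (fps_deriv (Efps \<nu>)) + fps_const (2*\<nu>+1) * fps_deriv (Efps \<nu>) + fps_const 2 * (fps_X * fps_deriv (Efps \<nu>))
     + fps_const (2*\<nu>+1) * Efps \<nu> = 0"
proof -
  define E where "E = (fps_exp (-1) :: complex fps)"
  define I where "I = Ifps \<nu>"
  define c where "c = fps_const (2*\<nu>+1)"
  have dE: "fps_deriv E = - E" by (simp add: E_def fps_eq_iff)
  have ode: "fps_X * fps_deriv (fps_deriv I) = fps_X * I - c * fps_deriv I"
    using Ifps_ode[of \<nu>] unfolding I_def c_def by (simp add: algebra_simps)
  have "fps_X * fps_deriv (fps_deriv (E * I)) + (c + 2 * fps_X) * fps_deriv (E * I) + c * (E * I)
      = E * (fps_X * fps_deriv (fps_deriv I)) - fps_X * E * I + c * E * fps_deriv I"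
    by (simp add: dE algebra_simps)
  also have "\<dots> = 0" unfolding ode by (simp add: algebra_simps)
  finally show ?thesis by (simp add: Efps_def E_def I_def c_def algebra_simps flip: numeral_fps_const)
qed

lemma Efps_rec:
  "of_nat (Suc m) * (of_nat m + 2*\<nu>+1) * (Efps \<nu> $ Suc m) = - (2 * of_nat m + 2*\<nu>+1) * (Efps \<nu> $ m)"
proof -
  have "(fps_X * fps_deriv (fps_deriv (Efps \<nu>)) + fps_const (2*\<nu>+1) * fps_deriv (Efps \<nu>) + fps_const 2 * (fps_X * fps_deriv (Efps \<nu>))
     + fps_const (2*\<nu>+1) * Efps \<nu>) $ m = 0"
    by (simp only: Efps_ode) simp
  moreover have "(fps_X * fps_deriv (fps_deriv (Efps \<nu>))) $ m = of_nat m * of_nat (Suc m) * Efps \<nu> $ Suc m"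
    by (cases m) (simp_all add: algebra_simps)
  moreover have "(fps_const 2 * (fps_X * fps_deriv (Efps \<nu>))) $ m = 2 * of_nat m * Efps \<nu> $ m"
    by (cases m) (simp_all add: algebra_simps)
  moreover have "(fps_const (2*\<nu>+1) * fps_deriv (Efps \<nu>)) $ m = (2*\<nu>+1) * of_nat (Suc m) * Efps \<nu> $ Suc m"
    by (simp add: algebra_simps)
  ultimately have "of_nat m * of_nat (Suc m) * Efps \<nu> $ Suc m + (2*\<nu>+1) * of_nat (Suc m) * Efps \<nu> $ Suc m
     + 2 * of_nat m * Efps \<nu> $ m + (2*\<nu>+1) * Efps \<nu> $ m = 0"
    by (simp only: fps_add_nth fps_mult_left_const_nth)
  thus ?thesis by algebra
qed

lemma Efps_0: "Efps \<nu> $ 0 = rGamma (\<nu> + 1)"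
  by (simp add: Efps_def Ifps_def fps_mult_nth)

locale mu_ok =
  fixes \<mu> :: complex
  assumes mu_ok: "\<And>n::nat. \<mu> \<noteq> - of_nat (Suc n)"
begin

lemma npi_a: "of_nat m + (\<mu>+1)/2 \<notin> \<int>\<^sub>\<le>\<^sub>0"
proof
  assume "of_nat m + (\<mu>+1)/2 \<in> \<int>\<^sub>\<le>\<^sub>0"
  then obtain n where "of_nat m + (\<mu>+1)/2 = - of_nat n" by (elim nonpos_Ints_cases')
  hence "\<mu> = - of_nat (Suc (2*m + 2*n))" by (simp add: field_simps) algebra
  thus False using mu_ok by blast
qed

lemma npi_b: "of_nat m + \<mu> + 1 \<notin> \<int>\<^sub>\<le>\<^sub>0"
proof
  assume "of_nat m + \<mu> + 1 \<in> \<int>\<^sub>\<le>\<^sub>0"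
  then obtain n where "of_nat m + \<mu> + 1 = - of_nat n" by (elim nonpos_Ints_cases')
  hence "\<mu> = - of_nat (Suc (m + n))" by (simp add: field_simps) algebra
  thus False using mu_ok by blast
qed

lemma npi_c: "\<mu>/2 + 1 \<notin> \<int>\<^sub>\<le>\<^sub>0"
proof
  assume "\<mu>/2 + 1 \<in> \<int>\<^sub>\<le>\<^sub>0"
  then obtain n where "\<mu>/2 + 1 = - of_nat n" by (elim nonpos_Ints_cases')
  hence "\<mu> = - of_nat (Suc (2*n + 1))" by (simp add: field_simps) algebra
  thus False using mu_ok by blast
qed

lemma nz_b: "of_nat m + \<mu> + 1 \<noteq> 0"
  using npi_b[of m] by auto

lemma Gamma_b_nz: "Gamma (of_nat m + \<mu> + 1) \<noteq> 0"
  using npi_b[of m] by (simp add: Gamma_eq_zero_iff)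

lemma Gamma_a_nz: "Gamma (of_nat m + (\<mu>+1)/2) \<noteq> 0"
  using npi_a[of m] by (simp add: Gamma_eq_zero_iff)

lemma two_powr: "(2::complex) powr \<mu> = exp (\<mu> * of_real (ln 2))"
proof -
  have "Ln (2::complex) = of_real (ln 2)" using Ln_of_real[of 2] by simp
  thus ?thesis by (simp add: powr_def)
qed

lemma dup: "rGamma (\<mu>/2 + 1) = Gamma ((\<mu>+1)/2) * 2 powr \<mu> / (of_real (sqrt pi) * Gamma (\<mu> + 1))"
proof -
  have d: "Gamma ((\<mu>+1)/2) * Gamma ((\<mu>+1)/2 + 1/2) =
             exp ((1 - 2*((\<mu>+1)/2)) * of_real (ln 2)) * of_real (sqrt pi) * Gamma (2*((\<mu>+1)/2))"
  proof (rule Gamma_legendre_duplication)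
    show "(\<mu>+1)/2 \<notin> \<int>\<^sub>\<le>\<^sub>0" using npi_a[of 0] by simp
    have "(\<mu>+1)/2 + 1/2 = \<mu>/2 + 1" by (simp add: field_simps)
    thus "(\<mu>+1)/2 + 1/2 \<notin> \<int>\<^sub>\<le>\<^sub>0" using npi_c by simp
  qed
  have e1: "(\<mu>+1)/2 + 1/2 = \<mu>/2 + 1" "2*((\<mu>+1)/2) = \<mu> + 1" "1 - 2*((\<mu>+1)/2) = -\<mu>" "1 - (\<mu>+1) = -\<mu>"
    by (simp_all add: field_simps)
  have d2: "Gamma ((\<mu>+1)/2) * Gamma (\<mu>/2 + 1) = exp (-\<mu> * of_real (ln 2)) * of_real (sqrt pi) * Gamma (\<mu>+1)"
    using d unfolding e1 .
  have g: "Gamma ((\<mu>+1)/2) \<noteq> 0" using Gamma_a_nz[of 0] by simp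
  have g2: "Gamma (\<mu> + 1) \<noteq> 0" using Gamma_b_nz[of 0] by simp
  have ex: "exp (\<mu> * of_real (ln 2)) * exp (-\<mu> * of_real (ln 2)) = (1::complex)"
    by (simp add: exp_add[symmetric])
  have sp: "(of_real (sqrt pi) :: complex) \<noteq> 0" by simp
  have "Gamma (\<mu>/2+1) * (Gamma ((\<mu>+1)/2) * exp (\<mu> * of_real (ln 2)) / (of_real (sqrt pi) * Gamma (\<mu> + 1)))
      = (Gamma ((\<mu>+1)/2) * Gamma (\<mu>/2+1)) * exp (\<mu> * of_real (ln 2)) / (of_real (sqrt pi) * Gamma (\<mu> + 1))"
    by (simp add: mult_ac)
  also have "\<dots> = (exp (\<mu> * of_real (ln 2)) * exp (-\<mu> * of_real (ln 2))) * (of_real (sqrt pi) * Gamma (\<mu>+1)) / (of_real (sqrt pi) * Gamma (\<mu> + 1))"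
    unfolding d2 by (simp add: mult_ac)
  also have "\<dots> = 1" unfolding ex using sp g2 by simp
  finally have "inverse (Gamma (\<mu>/2+1)) = Gamma ((\<mu>+1)/2) * exp (\<mu> * of_real (ln 2)) / (of_real (sqrt pi) * Gamma (\<mu> + 1))"
    by (rule inverse_unique)
  thus ?thesis unfolding rGamma_inverse_Gamma two_powr .
qed

lemma step_alg:
  fixes K L B F S T h A P :: complex
  assumes "K \<noteq> 0" "L \<noteq> 0" "B \<noteq> 0" "F \<noteq> 0" "S \<noteq> 0"
  shows "K * L * ((-2) * T * (h * A) * P / ((K * F) * S * (L * B))) = -(2*h) * (T * A * P / (F * S * B))"
  using assms by (simp add: field_simps)

definition bclosed :: "nat \<Rightarrow> complex" where
  "bclosed m = (-2)^m * Gamma (of_nat m + (\<mu>+1)/2) * 2 powr \<mu> / (fact m * of_real (sqrt pi) * Gamma (of_nat m + \<mu> + 1))"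

lemma Efps_closed: "Efps (\<mu>/2) $ m = bclosed m"
proof (induction m)
  case 0
  show ?case unfolding Efps_0 bclosed_def using dup by (simp add: add_ac)
next
  case (Suc m)
  have r: "of_nat (Suc m) * (of_nat m + \<mu> + 1) * (Efps (\<mu>/2) $ Suc m) = - (2 * of_nat m + \<mu> + 1) * (Efps (\<mu>/2) $ m)"
    using Efps_rec[of m "\<mu>/2"] by simp
  have ga: "Gamma (of_nat (Suc m) + (\<mu>+1)/2) = (of_nat m + (\<mu>+1)/2) * Gamma (of_nat m + (\<mu>+1)/2)"
    using Gamma_plus1[OF npi_a[of m]] by (simp add: add_ac)
  have gb: "Gamma (of_nat (Suc m) + \<mu> + 1) = (of_nat m + \<mu> + 1) * Gamma (of_nat m + \<mu> + 1)"
    using Gamma_plus1[OF npi_b[of m]] by (simp add: add_ac)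
  have c: "of_nat (Suc m) * (of_nat m + \<mu> + 1) * bclosed (Suc m) = - (2 * of_nat m + \<mu> + 1) * bclosed m"
  proof -
    have "of_nat (Suc m) * (of_nat m + \<mu> + 1) * bclosed (Suc m) =
      of_nat (Suc m) * (of_nat m + \<mu> + 1) * ((-2) * (-2)^m * ((of_nat m + (\<mu>+1)/2) * Gamma (of_nat m + (\<mu>+1)/2)) * 2 powr \<mu>
        / ((of_nat (Suc m) * fact m) * of_real (sqrt pi) * ((of_nat m + \<mu> + 1) * Gamma (of_nat m + \<mu> + 1))))"
      unfolding bclosed_def ga gb by (simp del: of_nat_Suc)
    also have "\<dots> = -(2 * (of_nat m + (\<mu>+1)/2)) * ((-2)^m * Gamma (of_nat m + (\<mu>+1)/2) * 2 powr \<mu>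
        / (fact m * of_real (sqrt pi) * Gamma (of_nat m + \<mu> + 1)))"
      by (rule step_alg) (use Gamma_b_nz[of m] nz_b[of m] in \<open>simp_all del: of_nat_Suc\<close>)
    also have "\<dots> = - (2 * of_nat m + \<mu> + 1) * bclosed m"
    proof -
      have h2: "2 * (of_nat m + (\<mu>+1)/2) = 2 * of_nat m + \<mu> + (1::complex)" by (simp add: field_simps)
      show ?thesis by (simp only: bclosed_def h2)
    qed
    finally show ?thesis .
  qed
  have nz: "of_nat (Suc m) * (of_nat m + \<mu> + 1) \<noteq> (0::complex)"
    using nz_b[of m] by (simp del: of_nat_Suc)
  have "of_nat (Suc m) * (of_nat m + \<mu> + 1) * Efps (\<mu>/2) $ Suc m = of_nat (Suc m) * (of_nat m + \<mu> + 1) * bclosed (Suc m)"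
    unfolding r c Suc.IH ..
  thus ?case by (rule mult_left_cancel[THEN iffD1, OF nz])
qed

end

definition Vfps :: "complex fps" where "Vfps = Abs_fps (\<lambda>n. if n = 0 then 0 else 1)"
definition Bfps :: "complex \<Rightarrow> complex fps" where "Bfps c = Abs_fps (\<lambda>n. (-1)^n * (c gchoose n))"
definition Phi :: "complex \<Rightarrow> complex \<Rightarrow> complex fps" where
  "Phi \<nu> X = fps_compose (Efps \<nu>) (fps_const (X/2) * Vfps)"

lemma has_fps_expansion_cong_ev:
  assumes "f has_fps_expansion F" "eventually (\<lambda>t. g t = f t) (nhds 0)"
  shows "g has_fps_expansion F"
  using assms unfolding has_fps_expansion_def by (auto elim: eventually_elim2)

lemma Ifps_exp: "BesselI_tilde \<nu> has_fps_expansion Ifps \<nu>"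
proof (rule has_fps_expansionI, rule always_eventually, rule allI)
  fix u :: complex
  have "(\<lambda>n. Ifps \<nu> $ (2*n) * u^(2*n)) sums BesselI_tilde \<nu> u"
  proof -
    have "(\<lambda>n. Ifps \<nu> $ (2*n) * u^(2*n)) = (\<lambda>k. (u/2)^(2*k) * rGamma (of_nat k + \<nu> + 1) / fact k)"
    proof
      fix k
      show "Ifps \<nu> $ (2*k) * u^(2*k) = (u/2)^(2*k) * rGamma (of_nat k + \<nu> + 1) / fact k"
        by (simp add: Ifps_def power_divide four_pow two_pow2 field_simps)
    qed
    thus ?thesis using BesselI_tilde_sums by simp
  qed
  moreover have "(\<lambda>n. Ifps \<nu> $ (2*n) * u^(2*n)) sums BesselI_tilde \<nu> u \<longleftrightarrow>
                 (\<lambda>n. Ifps \<nu> $ n * u^n) sums BesselI_tilde \<nu> u"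
    by (rule sums_mono_reindex[of "\<lambda>n. 2*n" "\<lambda>n. Ifps \<nu> $ n * u^n"])
       (auto simp: strict_mono_def Ifps_def elim!: evenE)
  ultimately show "(\<lambda>n. Ifps \<nu> $ n * u^n) sums BesselI_tilde \<nu> u" by simp
qed

lemma Efun_exp: "(\<lambda>v. exp (-v) * BesselI_tilde \<nu> v) has_fps_expansion Efps \<nu>"
  unfolding Efps_def by (intro has_fps_expansion_mult has_fps_expansion_exp_neg1 Ifps_exp)

lemma ev_ball: "eventually (\<lambda>t::complex. t \<in> ball 0 1) (nhds 0)"
  by (intro eventually_nhds_in_open) auto

lemma V_exp: "(\<lambda>t. t / (1 - t)) has_fps_expansion Vfps"
proof (rule has_fps_expansionI)
  show "eventually (\<lambda>t. (\<lambda>n. Vfps $ n * t^n) sums (t / (1 - t))) (nhds 0)"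
    using ev_ball
  proof eventually_elim
    case (elim t)
    hence "norm t < 1" by simp
    hence "(\<lambda>n. t^n) sums (1 / (1 - t))" by (rule geometric_sums)
    hence "(\<lambda>n. t * t^n) sums (t * (1 / (1 - t)))" by (rule sums_mult)
    hence "(\<lambda>n. Vfps $ Suc n * t^(Suc n)) sums (t / (1 - t))" by (simp add: Vfps_def)
    hence "(\<lambda>n. Vfps $ n * t^n) sums (t / (1 - t) + Vfps $ 0 * t^0)" by (rule sums_Suc_iff[THEN iffD1])
    thus ?case by (simp add: Vfps_def)
  qed
qed

lemma B_exp: "(\<lambda>t. (1 - t) powr c) has_fps_expansion Bfps c"
proof (rule has_fps_expansionI)
  show "eventually (\<lambda>t. (\<lambda>n. Bfps c $ n * t^n) sums ((1 - t) powr c)) (nhds 0)"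
    using ev_ball
  proof eventually_elim
    case (elim t)
    hence "norm (-t) < 1" by simp
    hence "(\<lambda>n. (c gchoose n) * (-t)^n) sums (1 + (-t)) powr c" by (rule gen_binomial_complex)
    thus ?case by (simp add: Bfps_def power_minus' mult_ac)
  qed
qed

lemma Eu_exp:
  "(\<lambda>t. exp (-(X/2 * (t/(1-t)))) * BesselI_tilde \<nu> (X/2 * (t/(1-t)))) has_fps_expansion Phi \<nu> X"
proof -
  have "((\<lambda>v. exp (-v) * BesselI_tilde \<nu> v) \<circ> (\<lambda>t. X/2 * (t/(1-t)))) has_fps_expansion
          fps_compose (Efps \<nu>) (fps_const (X/2) * Vfps)"
    by (intro has_fps_expansion_compose Efun_exp has_fps_expansion_cmult_left V_exp)
       (simp add: Vfps_def)
  thus ?thesis by (simp add: Phi_def o_def)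
qed

lemma degree_Pl: "degree (Pl l) \<le> l"
proof (induction l rule: Pl.induct)
  case 1 then show ?case by simp
next
  case 2 then show ?case by simp
next
  case (3 l)
  have "degree (smult (2 * of_nat l + 3) (pCons 0 (Pl (Suc l)))) \<le> Suc (Suc l)"
    using 3(2) by (intro order.trans[OF degree_smult_le] order.trans[OF degree_pCons_le]) simp
  moreover have "degree (Pl l) \<le> Suc (Suc l)" using 3(1) by simp
  ultimately show ?case by (simp add: degree_add_le)
qed

lemma poly_Pl_sum: "poly (Pl l) y = (\<Sum>k\<le>l. coeff (Pl l) k * y^k)"
proof -
  have "poly (Pl l) y = poly (\<Sum>i\<le>l. monom (coeff (Pl l) i) i) y"
    by (simp only: poly_as_sum_of_monoms'[OF degree_Pl])
  also have "\<dots> = (\<Sum>k\<le>l. coeff (Pl l) k * y^k)" by (simp add: poly_sum poly_monom)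
  finally show ?thesis .
qed

lemma term_eq:
  fixes s Y \<mu> :: complex
  assumes s: "s \<noteq> 0" and Y: "Y \<noteq> 0" and k: "k \<le> l"
  shows "s powr (-(of_nat l + (\<mu>+3)/2)) * Y^(2*l+1) * (s/Y)^(l+1) * (s/Y)^k
       = Y^(l-k) * s powr (of_nat k - (\<mu>+1)/2)"
proof -
  have e1: "Y^(2*l+1) = Y^(l-k) * (Y^(l+1) * Y^k)"
  proof -
    have "2*l+1 = (l-k) + ((l+1) + k)" using k by simp
    thus ?thesis by (simp only: power_add)
  qed
  have e2: "Y^(l+1) * (s/Y)^(l+1) = s^(l+1)" "Y^k * (s/Y)^k = s^k"
    using Y by (simp_all add: power_divide)
  have "s powr (-(of_nat l + (\<mu>+3)/2)) * Y^(2*l+1) * (s/Y)^(l+1) * (s/Y)^k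
      = Y^(l-k) * (s powr (-(of_nat l + (\<mu>+3)/2)) * ((Y^(l+1) * (s/Y)^(l+1)) * (Y^k * (s/Y)^k)))"
    unfolding e1 by (simp add: mult_ac)
  also have "\<dots> = Y^(l-k) * (s powr (-(of_nat l + (\<mu>+3)/2)) * s powr (of_nat (l+1+k)))"
  proof -
    have "s^(l+1) * s^k = s powr (of_nat (l+1+k))"
      using powr_complexpow[OF s, of "l+1+k"] by (simp add: power_add)
    thus ?thesis unfolding e2 by simp
  qed
  also have "s powr (-(of_nat l + (\<mu>+3)/2)) * s powr (of_nat (l+1+k)) = s powr (-(of_nat l + (\<mu>+3)/2) + of_nat (l+1+k))"
    by (rule powr_add[symmetric])
  also have "-(of_nat l + (\<mu>+3)/2) + of_nat (l+1+k) = of_nat k - (\<mu>+1)/2"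
    by (simp add: field_simps)
  finally show ?thesis .
qed

definition Eu :: "complex \<Rightarrow> complex \<Rightarrow> complex \<Rightarrow> complex" where
  "Eu \<mu> X t = exp (-(X/2 * (t/(1-t)))) * BesselI_tilde (\<mu>/2) (X/2 * (t/(1-t)))"

definition Ck :: "nat \<Rightarrow> complex \<Rightarrow> nat \<Rightarrow> complex" where
  "Ck l X k = 2^l * of_real (sqrt pi) * coeff (Pl l) k * (X/2)^(l-k)"

definition Hfun :: "complex \<Rightarrow> nat \<Rightarrow> complex \<Rightarrow> complex \<Rightarrow> complex" where
  "Hfun \<mu> l X t = (\<Sum>k\<le>l. Ck l X k * ((1 - t) powr (of_nat k - (\<mu>+1)/2) * Eu \<mu> X t))"

lemma G_gen_eq:
  assumes x: "x > 0" and t: "t \<noteq> 1"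
  shows "G_gen \<mu> l t x = Hfun \<mu> l (of_real x) t"
proof -
  define X where "X = (of_real x :: complex)"
  define s where "s = 1 - t"
  define Y where "Y = X/2"
  have s0: "s \<noteq> 0" using t by (simp add: s_def)
  have Y0: "Y \<noteq> 0" using x by (simp add: Y_def X_def)
  define z where "z = X / (2 * s)"
  have z0: "z \<noteq> 0" using s0 Y0 by (simp add: z_def Y_def)
  have iz: "inverse z = s / Y" using s0 Y0 by (simp add: z_def Y_def field_simps)
  have arg: "t * X / (2 * s) = X/2 * (t/s)" by simp
  have ex: "exp Y * exp (-z) = exp (-(X/2 * (t/s)))"
  proof -
    have "Y + -z = -(X/2 * (t/s))" using s0 unfolding Y_def z_def s_def by (simp add: field_simps)
    thus ?thesis by (simp add: exp_add[symmetric])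
  qed
  have of: "(of_real ((x/2)^(2*l+1) * exp (x/2)) :: complex) = Y^(2*l+1) * exp Y"
    by (simp add: Y_def X_def exp_of_real[symmetric])
  have K: "BesselK_tilde (of_nat l + 1/2) z = 2^l * of_real (sqrt pi) * (s/Y)^(l+1) * exp (-z) * (\<Sum>k\<le>l. coeff (Pl l) k * (s/Y)^k)"
    unfolding BesselK_tilde_half[OF z0] Qk_def poly_Pl_sum iz[symmetric] by (simp add: power_inverse)
  have "G_gen \<mu> l t x = s powr (-(of_nat l + (\<mu>+3)/2)) * (Y^(2*l+1) * exp Y) * BesselI_tilde (\<mu>/2) (X/2 * (t/s))
          * (2^l * of_real (sqrt pi) * (s/Y)^(l+1) * exp (-z) * (\<Sum>k\<le>l. coeff (Pl l) k * (s/Y)^k))"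
  proof -
    have g: "G_gen \<mu> l t x = s powr (-(of_nat l + (\<mu>+3)/2)) * of_real ((x/2)^(2*l+1) * exp (x/2))
       * BesselI_tilde (\<mu>/2) (t * X / (2 * s)) * BesselK_tilde (of_nat l + 1/2) z"
      by (simp add: G_gen_def X_def s_def z_def)
    show ?thesis unfolding g of K arg by simp
  qed
  also have "\<dots> = (\<Sum>k\<le>l. (2^l * of_real (sqrt pi) * coeff (Pl l) k) *
       (s powr (-(of_nat l + (\<mu>+3)/2)) * Y^(2*l+1) * (s/Y)^(l+1) * (s/Y)^k) *
       ((exp Y * exp (-z)) * BesselI_tilde (\<mu>/2) (X/2 * (t/s))))"
    unfolding sum_distrib_left by (intro sum.cong refl) (simp only: mult_ac)
  also have "\<dots> = (\<Sum>k\<le>l. (2^l * of_real (sqrt pi) * coeff (Pl l) k) *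
       (Y^(l-k) * s powr (of_nat k - (\<mu>+1)/2)) * (exp (-(X/2 * (t/s))) * BesselI_tilde (\<mu>/2) (X/2 * (t/s))))"
    by (intro sum.cong refl) (subst term_eq[OF s0 Y0], simp, simp only: ex)
  also have "\<dots> = Hfun \<mu> l X t"
    unfolding Hfun_def Ck_def Eu_def Y_def[symmetric] s_def[symmetric]
    by (intro sum.cong refl) (simp add: mult_ac)
  finally show ?thesis by (simp add: X_def)
qed

definition Ffps :: "complex \<Rightarrow> nat \<Rightarrow> complex \<Rightarrow> complex fps" where
  "Ffps \<mu> l X = (\<Sum>k\<le>l. fps_const (Ck l X k) * (Bfps (of_nat k - (\<mu>+1)/2) * Phi (\<mu>/2) X))"

lemma Hfun_exp: "Hfun \<mu> l X has_fps_expansion Ffps \<mu> l X"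
  unfolding Hfun_def Ffps_def Eu_def
  by (intro has_fps_expansion_sum has_fps_expansion_cmult_left has_fps_expansion_mult B_exp Eu_exp)

lemma G_exp:
  assumes "x > 0"
  shows "(\<lambda>t. G_gen \<mu> l t x) has_fps_expansion Ffps \<mu> l (of_real x)"
proof (rule has_fps_expansion_cong_ev[OF Hfun_exp])
  show "eventually (\<lambda>t. G_gen \<mu> l t x = Hfun \<mu> l (of_real x) t) (nhds 0)"
    using ev_ball
  proof eventually_elim
    case (elim t)
    hence "t \<noteq> 1" by auto
    thus ?case by (rule G_gen_eq[OF assms])
  qed
qed

lemma M_poly_eq:
  assumes "x > 0"
  shows "M_poly \<mu> l j x = Gamma (of_nat j + \<mu> + 1) / (2 powr \<mu> * Gamma (of_nat j + (\<mu> + 1)/2))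
           * (Ffps \<mu> l (of_real x) $ j)"
proof -
  have "Ffps \<mu> l (of_real x) $ j = (deriv ^^ j) (\<lambda>t. G_gen \<mu> l t x) 0 / fact j"
    by (rule fps_nth_fps_expansion[OF G_exp[OF assms]])
  hence "(deriv ^^ j) (\<lambda>t. G_gen \<mu> l t x) 0 = fact j * Ffps \<mu> l (of_real x) $ j"
    by (simp add: field_simps)
  thus ?thesis unfolding M_poly_def by (simp add: field_simps)
qed

lemma Phi_nth: "Phi \<nu> X $ m = (\<Sum>r=0..m. Efps \<nu> $ r * ((X/2)^r * (Vfps^r $ m)))"
  unfolding Phi_def fps_compose_nth by (simp add: power_mult_distrib)

lemma Ffps_nth: "Ffps \<mu> l X $ j = (\<Sum>k\<le>l. Ck l X k * (\<Sum>i=0..j. Bfps (of_nat k - (\<mu>+1)/2) $ i *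
       (\<Sum>r=0..j-i. Efps (\<mu>/2) $ r * ((X/2)^r * (Vfps^r $ (j-i))))))"
  unfolding Ffps_def fps_sum_nth fps_mult_left_const_nth unfolding fps_mult_nth Phi_nth ..

lemma sum_single:
  assumes "finite A" "a \<in> A" "\<And>x. x \<in> A \<Longrightarrow> x \<noteq> a \<Longrightarrow> g x = (0::complex)"
  shows "sum g A = g a"
proof -
  have "sum g A = g a + sum g (A - {a})" by (rule sum.remove[OF assms(1,2)])
  also have "sum g (A - {a}) = 0" using assms(3) by (intro sum.neutral) auto
  finally show ?thesis by simp
qed

lemma triple_single:
  fixes f :: "nat \<Rightarrow> nat \<Rightarrow> nat \<Rightarrow> complex"
  assumes k0: "k0 \<le> l" and i0: "i0 \<le> j" and r0: "r0 \<le> j - i0"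
    and z: "\<And>k i r. k \<le> l \<Longrightarrow> i \<le> j \<Longrightarrow> r \<le> j - i \<Longrightarrow> (k, i, r) \<noteq> (k0, i0, r0) \<Longrightarrow> f k i r = 0"
  shows "(\<Sum>k\<le>l. \<Sum>i=0..j. \<Sum>r=0..j-i. f k i r) = f k0 i0 r0"
proof -
  have "(\<Sum>k\<le>l. \<Sum>i=0..j. \<Sum>r=0..j-i. f k i r) = (\<Sum>i=0..j. \<Sum>r=0..j-i. f k0 i r)"
  proof (rule sum_single)
    fix k assume "k \<in> {..l}" "k \<noteq> k0"
    thus "(\<Sum>i=0..j. \<Sum>r=0..j-i. f k i r) = 0" using z by (intro sum.neutral ballI) auto
  qed (use k0 in auto)
  also have "\<dots> = (\<Sum>r=0..j-i0. f k0 i0 r)"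
  proof (rule sum_single)
    fix i assume "i \<in> {0..j}" "i \<noteq> i0"
    thus "(\<Sum>r=0..j-i. f k0 i r) = 0" using z k0 by (intro sum.neutral ballI) auto
  qed (use i0 in auto)
  also have "\<dots> = f k0 i0 r0"
  proof (rule sum_single)
    fix r assume "r \<in> {0..j-i0}" "r \<noteq> r0"
    thus "f k0 i0 r = 0" using z k0 i0 by auto
  qed (use r0 in auto)
  finally show ?thesis .
qed

lemma Pl_coeff0: "coeff (Pl l) 0 = 1"
  by (induction l rule: Pl.induct) simp_all

lemma half_npi: "(of_nat n + 1/2 :: complex) \<notin> \<int>\<^sub>\<le>\<^sub>0"
proof
  assume "(of_nat n + 1/2 :: complex) \<in> \<int>\<^sub>\<le>\<^sub>0"
  then obtain m where "(of_nat n + 1/2 :: complex) = - of_nat m" by (elim nonpos_Ints_cases')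
  hence "Re (of_nat n + 1/2 :: complex) = Re (- of_nat m)" by simp
  thus False by simp
qed

lemma Pl_coeff_top: "coeff (Pl l) l = 2^l * Gamma (of_nat l + 1/2) / of_real (sqrt pi)"
proof (induction l rule: Pl.induct)
  case 1 thus ?case by (simp add: Gamma_one_half_complex)
next
  case 2
  have "Gamma (of_nat 1 + 1/2 :: complex) = (1/2) * Gamma (1/2)"
    using Gamma_plus1[of "1/2 :: complex"] half_npi[of 0] by simp
  thus ?case by (simp add: Gamma_one_half_complex algebra_simps)
next
  case (3 l)
  have c0: "coeff (Pl l) (Suc (Suc l)) = 0"
    using degree_Pl[of l] by (intro coeff_eq_0) simp
  have g: "Gamma (of_nat (Suc (Suc l)) + 1/2 :: complex) = (of_nat (Suc l) + 1/2) * Gamma (of_nat (Suc l) + 1/2)"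
    using Gamma_plus1[OF half_npi[of "Suc l"]] by (simp add: add_ac)
  have "coeff (Pl (Suc (Suc l))) (Suc (Suc l)) = (2 * of_nat l + 3) * coeff (Pl (Suc l)) (Suc l)"
    using c0 by simp
  also have "\<dots> = (2 * of_nat l + 3) * (2^(Suc l) * Gamma (of_nat (Suc l) + 1/2) / of_real (sqrt pi))"
    using 3(2) by simp
  also have "\<dots> = 2^(Suc (Suc l)) * Gamma (of_nat (Suc (Suc l)) + 1/2) / of_real (sqrt pi)"
    unfolding g by (simp add: field_simps)
  finally show ?case .
qed

lemma Vfps_eq: "Vfps = fps_X * Abs_fps (\<lambda>_. 1)"
  by (rule fps_ext) (simp add: Vfps_def)

lemma Vfps_pow_diag: "Vfps ^ j $ j = 1"
  unfolding Vfps_eq power_mult_distrib fps_X_power_mult_nth by (simp add: fps_nth_power_0)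

lemma Bfps_0: "Bfps c $ 0 = 1" by (simp add: Bfps_def)

definition Nc :: "complex \<Rightarrow> nat \<Rightarrow> complex" where
  "Nc \<mu> j = Gamma (of_nat j + \<mu> + 1) / (2 powr \<mu> * Gamma (of_nat j + (\<mu> + 1)/2))"

definition acoef :: "complex \<Rightarrow> nat \<Rightarrow> nat \<Rightarrow> nat \<Rightarrow> nat \<Rightarrow> nat \<Rightarrow> complex" where
  "acoef \<mu> l j k i r = Nc \<mu> j * 2^l * of_real (sqrt pi) * coeff (Pl l) k * (Bfps (of_nat k - (\<mu>+1)/2) $ i)
       * (Efps (\<mu>/2) $ r) * (Vfps^r $ (j-i)) / 2^(l-k+r)"

definition pfin :: "complex \<Rightarrow> nat \<Rightarrow> nat \<Rightarrow> complex poly" where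
  "pfin \<mu> l j = (\<Sum>k\<le>l. \<Sum>i=0..j. \<Sum>r=0..j-i. monom (acoef \<mu> l j k i r) (l-k+r))"

lemma poly_pfin: "poly (pfin \<mu> l j) X = Nc \<mu> j * (Ffps \<mu> l X $ j)"
proof -
  have "poly (pfin \<mu> l j) X = (\<Sum>k\<le>l. \<Sum>i=0..j. \<Sum>r=0..j-i. acoef \<mu> l j k i r * X^(l-k+r))"
    by (simp add: pfin_def poly_sum poly_monom)
  also have "\<dots> = (\<Sum>k\<le>l. \<Sum>i=0..j. \<Sum>r=0..j-i. Nc \<mu> j * (Ck l X k * (Bfps (of_nat k - (\<mu>+1)/2) $ i *
       (Efps (\<mu>/2) $ r * ((X/2)^r * (Vfps^r $ (j-i)))))))"
  proof (intro sum.cong refl)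
    fix k i r
    have e: "X^(l-k+r) / 2^(l-k+r) = (X/2)^(l-k) * (X/2)^r" by (simp add: power_add power_divide)
    show "acoef \<mu> l j k i r * X^(l-k+r) = Nc \<mu> j * (Ck l X k * (Bfps (of_nat k - (\<mu>+1)/2) $ i *
       (Efps (\<mu>/2) $ r * ((X/2)^r * (Vfps^r $ (j-i))))))"
    proof -
      have "acoef \<mu> l j k i r * X^(l-k+r) = Nc \<mu> j * 2^l * of_real (sqrt pi) * coeff (Pl l) k * (Bfps (of_nat k - (\<mu>+1)/2) $ i)
       * (Efps (\<mu>/2) $ r) * (Vfps^r $ (j-i)) * (X^(l-k+r) / 2^(l-k+r))"
        unfolding acoef_def by (simp add: field_simps)
      also have "\<dots> = Nc \<mu> j * (Ck l X k * (Bfps (of_nat k - (\<mu>+1)/2) $ i *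
       (Efps (\<mu>/2) $ r * ((X/2)^r * (Vfps^r $ (j-i))))))"
        unfolding e Ck_def by (simp only: mult_ac)
      finally show ?thesis .
    qed
  qed
  also have "\<dots> = Nc \<mu> j * (Ffps \<mu> l X $ j)"
    unfolding Ffps_nth by (simp add: sum_distrib_left)
  finally show ?thesis .
qed

lemma coeff_pfin: "coeff (pfin \<mu> l j) d = (\<Sum>k\<le>l. \<Sum>i=0..j. \<Sum>r=0..j-i. if l-k+r = d then acoef \<mu> l j k i r else 0)"
  by (simp add: pfin_def coeff_sum)

lemma coeff_pfin_top: "coeff (pfin \<mu> l j) (j+l) = acoef \<mu> l j 0 0 j"
proof -
  have "coeff (pfin \<mu> l j) (j+l) = (if l-0+j = j+l then acoef \<mu> l j 0 0 j else 0)"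
    unfolding coeff_pfin by (rule triple_single) auto
  thus ?thesis by simp
qed

lemma coeff_pfin_0: "coeff (pfin \<mu> l j) 0 = acoef \<mu> l j l j 0"
proof -
  have "coeff (pfin \<mu> l j) 0 = (if l-l+0 = 0 then acoef \<mu> l j l j 0 else 0)"
    unfolding coeff_pfin
  proof (rule triple_single)
    fix k i r assume "k \<le> l" "i \<le> j" "r \<le> j - i" "(k, i, r) \<noteq> (l, j, 0)"
    show "(if l-k+r = 0 then acoef \<mu> l j k i r else 0) = 0"
    proof (cases "l-k+r = 0")
      case True
      with \<open>k \<le> l\<close> have "k = l" "r = 0" by auto
      with \<open>(k, i, r) \<noteq> (l, j, 0)\<close> \<open>i \<le> j\<close> have "j - i \<noteq> 0" by auto
      hence "Vfps^r $ (j-i) = 0" using \<open>r = 0\<close> by simp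
      hence "acoef \<mu> l j k i r = 0" unfolding acoef_def by (simp only: mult_zero_right div_0)
      thus ?thesis by (subst if_P[OF True])
    qed (rule if_not_P, assumption)
  qed auto
  thus ?thesis by simp
qed

lemma degree_pfin: "degree (pfin \<mu> l j) \<le> j + l"
  unfolding pfin_def
  by (intro degree_sum_le finite_atLeastAtMost finite_atMost order.trans[OF degree_monom_le]) auto

lemma top_alg:
  fixes A B P S F :: complex
  assumes "A \<noteq> 0" "B \<noteq> 0" "P \<noteq> 0" "S \<noteq> 0" "F \<noteq> 0"
  shows "B / (P * A) * 2^l * S * 1 * 1 * ((-2)^j * A * P / (F * S * B)) * 1 / 2^(l+j) = (-1)^j / F"
proof -
  have "(-2::complex)^j = (-1)^j * 2^j" by (simp flip: power_mult_distrib)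
  moreover have "(2::complex)^(l+j) = 2^l * 2^j" by (simp add: power_add)
  ultimately show ?thesis using assms by (simp add: field_simps)
qed

lemma const_alg:
  fixes A B P S Gh Gc po F Q :: complex
  assumes "A \<noteq> 0" "P \<noteq> 0" "S \<noteq> 0" "F \<noteq> 0" "Q * P = 4^l"
  shows "B / (P * A) * 2^l * S * (2^l * Gh / S) * (po / F) * inverse Gc * 1 / 1
       = Q * Gh * B * po / (F * Gc * A)"
proof -
  have Q: "Q = 4^l / P" using assms(2,5) by (simp add: field_simps)
  have "(2::complex)^l * 2^l = 4^l" by (simp flip: power_mult_distrib)
  thus ?thesis using assms unfolding Q by (simp add: field_simps)
qed

theorem theorem2p1:
  fixes \<mu> :: complex and l j :: nat
  assumes "\<And>n::nat. \<mu> \<noteq> - of_nat (Suc n)"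
  shows "\<exists>p :: complex poly.
           degree p = j + l
         \<and> coeff p (j + l) = (-1)^j / fact j
         \<and> coeff p 0 =
             2 powr (2 * of_nat l - \<mu>) * Gamma (of_nat l + 1/2) * Gamma (of_nat j + \<mu> + 1)
               * pochhammer ((\<mu> + 1)/2 - of_nat l) j
             / (fact j * Gamma ((\<mu> + 2)/2) * Gamma (of_nat j + (\<mu> + 1)/2))
         \<and> (\<forall>x::real. x > 0 \<longrightarrow> M_poly \<mu> l j x = poly p (of_real x))"
proof -
  interpret mu_ok \<mu> using assms by unfold_locales
  define p where "p = pfin \<mu> l j"
  have P0: "(2::complex) powr \<mu> \<noteq> 0" by (simp add: powr_def)
  have top: "coeff p (j + l) = (-1)^j / fact j"
  proof -
    have "coeff p (j+l) = acoef \<mu> l j 0 0 j" unfolding p_def by (rule coeff_pfin_top)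
    also have "\<dots> = Nc \<mu> j * 2^l * of_real (sqrt pi) * 1 * 1 * bclosed j * 1 / 2^(l+j)"
      unfolding acoef_def Pl_coeff0 Bfps_0 Efps_closed by (simp add: Vfps_pow_diag)
    also have "\<dots> = (-1)^j / fact j"
      unfolding Nc_def bclosed_def
      by (rule top_alg) (use Gamma_a_nz[of j] Gamma_b_nz[of j] P0 in auto)
    finally show ?thesis .
  qed
  have const: "coeff p 0 =
             2 powr (2 * of_nat l - \<mu>) * Gamma (of_nat l + 1/2) * Gamma (of_nat j + \<mu> + 1)
               * pochhammer ((\<mu> + 1)/2 - of_nat l) j
             / (fact j * Gamma ((\<mu> + 2)/2) * Gamma (of_nat j + (\<mu> + 1)/2))"
  proof -
    have B: "Bfps (of_nat l - (\<mu>+1)/2) $ j = pochhammer ((\<mu> + 1)/2 - of_nat l) j / fact j"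
      by (simp add: Bfps_def gbinomial_pochhammer)
    have E0: "Efps (\<mu>/2) $ 0 = inverse (Gamma ((\<mu> + 2)/2))"
      by (simp add: Efps_0 rGamma_inverse_Gamma add_divide_distrib)
    have pw: "2 powr (2 * of_nat l - \<mu>) * 2 powr \<mu> = (4::complex)^l"
    proof -
      have "2 powr (2 * of_nat l - \<mu>) * 2 powr \<mu> = (2::complex) powr (2 * of_nat l - \<mu> + \<mu>)"
        by (rule powr_add[symmetric])
      also have "\<dots> = 2 powr (of_nat (2*l))" by simp
      also have "\<dots> = 2^(2*l)" by (rule powr_complexpow) simp
      also have "\<dots> = 4^l" by (simp add: power_mult)
      finally show ?thesis .
    qed
    have "coeff p 0 = acoef \<mu> l j l j 0" unfolding p_def by (rule coeff_pfin_0)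
    also have "\<dots> = Nc \<mu> j * 2^l * of_real (sqrt pi) * (2^l * Gamma (of_nat l + 1/2) / of_real (sqrt pi))
        * (pochhammer ((\<mu> + 1)/2 - of_nat l) j / fact j) * inverse (Gamma ((\<mu> + 2)/2)) * 1 / 1"
      unfolding acoef_def Pl_coeff_top B E0 by simp
    also have "\<dots> = 2 powr (2 * of_nat l - \<mu>) * Gamma (of_nat l + 1/2) * Gamma (of_nat j + \<mu> + 1)
               * pochhammer ((\<mu> + 1)/2 - of_nat l) j
             / (fact j * Gamma ((\<mu> + 2)/2) * Gamma (of_nat j + (\<mu> + 1)/2))"
      unfolding Nc_def by (rule const_alg) (use Gamma_a_nz[of j] P0 pw in auto)
    finally show ?thesis .
  qed
  have deg: "degree p = j + l"
  proof (rule antisym)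
    show "degree p \<le> j + l" unfolding p_def by (rule degree_pfin)
    show "j + l \<le> degree p" using top by (intro le_degree) simp
  qed
  have ev: "\<forall>x::real. x > 0 \<longrightarrow> M_poly \<mu> l j x = poly p (of_real x)"
    using M_poly_eq poly_pfin unfolding p_def Nc_def by simp
  show ?thesis using deg top const ev by blast
qed

end
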